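(* Let $f,h:\mathbb{R}^d\to\mathbb{R}$ be Lipschitz with constants $L_f,L_h$, $a,b>0$, and $\widetilde Q=\{(x,s,t):h(x)\le as,\ f(x)+as\le bt\}$. Let $q\in\mathbb{R}^{d+2}$, $p_{k-1}\in\widetilde Q$, $r_{\mathrm{loc}}=\|p_{k-1}-q\|$, and let $p_*$ be a minimizer of $\|p-q\|$ over $\widetilde Q\cap\{p:\|p-q\|\le 2r_{\mathrm{loc}}\}$. Fix $c>1$ and set $\widetilde Q_{\mathrm{loc}}(c)=\widetilde Q\cap\{p:\|p-q\|\le cr_{\mathrm{loc}}\}$, $\widetilde C_h=\sqrt{L_h^2+a^2}$, $\widetilde C_f=\sqrt{L_f^2+a^2+b^2}$, $\mu=\min\{a/\widetilde C_h,\ b/\widetilde C_f\}$, $\lambda=2+a/b$, $\kappa=\frac{c-1}{\lambda+\mu}$, and $\bar p=p_*+(0,\Delta s,\frac ab\Delta s+\Delta t)$ with $\Delta s=\Delta t=\kappa r_{\mathrm{loc}}$ (here $0\in\mathbb{R}^d$). Then the closed ball of center $\bar p$ and radius $\kappa\mu r_{\mathrm{loc}}$ is contained in $\widetilde Q_{\mathrm{loc}}(c)$. In particular, $\mathrm{minwidth}(\widetilde Q_{\mathrm{loc}}(c))\ge2\kappa\mu r_{\mathrm{loc}}$ and $$\gamma(c):=\frac{cr_{\mathrm{loc}}}{\mathrm{minwidth}(\widetilde Q_{\mathrm{loc}}(c))}\le\frac{c(\lambda+\mu)}{(c-1)\mu}.$$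
   Context: $\mathrm{minwidth}(S)=\min_{\|w\|=1}(\max_{y\in S}w^\top y-\min_{y\in S}w^\top y)$. *)

theory Defs
  imports "HOL-Analysis.Analysis"
begin

definition minwidth :: "'a::euclidean_space set \<Rightarrow> real" where
  "minwidth S = (INF w\<in>{w. norm w = 1}. (SUP y\<in>S. w \<bullet> y) - (INF y\<in>S. w \<bullet> y))"

text \<open>The lifted set Q~ = {(x,s,t). h x \<le> a s, f x + a s \<le> b t} in R^(d+2),
  represented as the product (real^'d) \<times> real \<times> real (Euclidean norm).\<close>
definition Qtil :: "(real^'d \<Rightarrow> real) \<Rightarrow> (real^'d \<Rightarrow> real) \<Rightarrow> real \<Rightarrow> real
    \<Rightarrow> ((real^'d) \<times> real \<times> real) set" where
  "Qtil f h a b = {(x, s, t). h x \<le> a * s \<and> f x + a * s \<le> b * t}"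

end

theory Submission
  imports Defs
begin

lemma cs3:
  fixes al be ga x y z :: real
  shows "al*x + be*y + ga*z \<le> sqrt (al^2+be^2+ga^2) * sqrt (x^2+y^2+z^2)"
proof -
  have id: "(al^2+be^2+ga^2)*(x^2+y^2+z^2) - (al*x + be*y + ga*z)^2
      = (al*y-be*x)^2 + (al*z-ga*x)^2 + (be*z-ga*y)^2"
    by (simp add: power2_eq_square algebra_simps)
  have sq: "(al*x + be*y + ga*z)^2 \<le> (al^2+be^2+ga^2)*(x^2+y^2+z^2)"
    using id by (smt (verit) zero_le_power2)
  have "al*x + be*y + ga*z \<le> sqrt ((al*x + be*y + ga*z)^2)" by simp
  also have "\<dots> \<le> sqrt ((al^2+be^2+ga^2)*(x^2+y^2+z^2))"
    using sq real_sqrt_le_mono by blast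
  finally show ?thesis by (simp add: real_sqrt_mult)
qed

lemma normv3:
  fixes u :: "real^'d" and s t :: real
  shows "norm (u, s, t) = sqrt ((norm u)^2 + s^2 + t^2)"
  by (simp add: norm_Pair add.assoc)

lemma core:
  fixes f h :: "real^'d \<Rightarrow> real"
    and Lf Lh a b c r mu kappa Ch Cf ds :: real
    and q pk pstar pbar :: "(real^'d) \<times> real \<times> real"
  assumes lf: "Lf-lipschitz_on UNIV f" and lh: "Lh-lipschitz_on UNIV h"
    and a: "a > 0" and b: "b > 0"
    and ps: "pstar \<in> Qtil f h a b"
    and psr: "norm (pstar - q) \<le> r"
    and Ch: "Ch = sqrt (Lh\<^sup>2 + a\<^sup>2)"
    and Cf: "Cf = sqrt (Lf\<^sup>2 + a\<^sup>2 + b\<^sup>2)"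
    and mu: "mu = min (a / Ch) (b / Cf)"
    and kappa: "kappa = (c - 1) / (2 + a / b + mu)"
    and c: "c > 1" and r: "r \<ge> 0"
    and ds: "ds = kappa * r"
    and pbar: "pbar = pstar + (0, ds, a / b * ds + ds)"
  shows "cball pbar (kappa * mu * r) \<subseteq> Qtil f h a b \<inter> {p. norm (p - q) \<le> c * r}"
proof
  fix p assume "p \<in> cball pbar (kappa * mu * r)"
  then have pv: "norm (p - pbar) \<le> kappa * mu * r" by (simp add: dist_norm norm_minus_commute)
  obtain xs ss ts where pse: "pstar = (xs, ss, ts)" by (cases pstar) auto
  obtain u sg tau where ve: "p - pbar = (u, sg, tau)" by (cases "p - pbar") auto
  have pe: "p = (xs + u, ss + ds + sg, ts + (a/b*ds + ds) + tau)"
  proof -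
    have "p = pbar + (p - pbar)" by simp
    then show ?thesis using ve pbar pse by (simp add: algebra_simps)
  qed
  have h1: "h xs \<le> a * ss" and f1: "f xs + a * ss \<le> b * ts" using ps pse by (auto simp: Qtil_def)
  have Chp: "Ch \<ge> a" unfolding Ch by (simp add: real_le_rsqrt a less_imp_le)
  have Cfp: "Cf \<ge> b" unfolding Cf using b
    by (smt (verit) real_le_rsqrt zero_le_power2)
  have mupos: "mu > 0" unfolding mu using a b Chp Cfp by simp
  have kpos: "kappa > 0" unfolding kappa using c a b mupos by (smt (verit) divide_pos_pos)
  have kr: "kappa * r \<ge> 0" using kpos r by simp
  have mua: "Ch * mu \<le> a" unfolding mu using Chp a
    by (smt (verit) min.cobounded1 mult_left_mono nonzero_mult_div_cancel_left times_divide_eq_right)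
  have mub: "Cf * mu \<le> b" unfolding mu using Cfp b
    by (smt (verit) min.cobounded2 mult_left_mono nonzero_mult_div_cancel_left times_divide_eq_right)
  have nv: "sqrt ((norm u)^2 + sg^2 + tau^2) \<le> kappa * mu * r" using pv ve normv3 by metis
  have hu: "h (xs + u) \<le> h xs + Lh * norm u"
    using lipschitz_onD[OF lh, of "xs+u" xs] by (simp add: dist_norm)
  have fu: "f (xs + u) \<le> f xs + Lf * norm u"
    using lipschitz_onD[OF lf, of "xs+u" xs] by (simp add: dist_norm)
  have "Lh * norm u + (-a) * sg + 0 * tau \<le> sqrt (Lh^2 + (-a)^2 + 0^2) * sqrt ((norm u)^2 + sg^2 + tau^2)"
    by (rule cs3)
  also have "\<dots> = Ch * sqrt ((norm u)^2 + sg^2 + tau^2)" by (simp add: Ch)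
  also have "\<dots> \<le> Ch * (kappa * mu * r)" using nv Chp a by (simp add: mult_left_mono)
  also have "\<dots> = (Ch * mu) * (kappa * r)" by simp
  also have "\<dots> \<le> a * (kappa * r)" using mua kr by (simp add: mult_right_mono)
  finally have H: "Lh * norm u - a * sg \<le> a * ds" using ds by simp
  have "Lf * norm u + a * sg + (-b) * tau \<le> sqrt (Lf^2 + a^2 + (-b)^2) * sqrt ((norm u)^2 + sg^2 + tau^2)"
    by (rule cs3)
  also have "\<dots> = Cf * sqrt ((norm u)^2 + sg^2 + tau^2)" by (simp add: Cf)
  also have "\<dots> \<le> Cf * (kappa * mu * r)" using nv Cfp b by (simp add: mult_left_mono)
  also have "\<dots> = (Cf * mu) * (kappa * r)" by simp
  also have "\<dots> \<le> b * (kappa * r)" using mub kr by (simp add: mult_right_mono)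
  finally have F: "Lf * norm u + a * sg - b * tau \<le> b * ds" using ds by simp
  have bb: "b * (a / b * ds) = a * ds" using b by simp
  have inQ: "p \<in> Qtil f h a b"
    unfolding pe Qtil_def using hu fu h1 f1 H F bb by (simp add: algebra_simps)
  have n0: "norm ((0::real^'d), ds, a / b * ds + ds) \<le> (2 + a/b) * (kappa * r)"
  proof -
    have "norm ((0::real^'d), ds, a / b * ds + ds) = norm (ds, a / b * ds + ds)" by simp
    also have "\<dots> \<le> norm ds + norm (a / b * ds + ds)" by (rule norm_Pair_le)
    also have "\<dots> = (2 + a/b) * (kappa * r)" using ds kr a b by (simp add: algebra_simps)
    finally show ?thesis .
  qed
  have "p - q = (pstar - q) + (0, ds, a / b * ds + ds) + (p - pbar)" using pbar by simp
  then have "norm (p - q) \<le> norm (pstar - q) + norm ((0::real^'d), ds, a / b * ds + ds) + norm (p - pbar)"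
    by (metis norm_triangle_le order_refl add_mono)
  also have "\<dots> \<le> r + (2 + a/b) * (kappa * r) + kappa * mu * r" using psr n0 pv by simp
  also have "\<dots> = r + (2 + a/b + mu) * kappa * r" by (simp add: algebra_simps)
  also have "\<dots> = c * r"
  proof -
    have L: "2 + a/b + mu > 0" using a b mupos by (smt (verit) divide_pos_pos)
    have e: "(2 + a/b + mu) * kappa = c - 1" unfolding kappa using L by simp
    show ?thesis unfolding e by (simp add: algebra_simps)
  qed
  finally show "p \<in> Qtil f h a b \<inter> {p. norm (p - q) \<le> c * r}" using inQ by simp
qed

lemma minwidth_ge:
  fixes S :: "'a::euclidean_space set"
  assumes bS: "bounded S" and sub: "cball p0 rho \<subseteq> S" and rho: "rho \<ge> 0"
  shows "minwidth S \<ge> 2 * rho"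
  unfolding minwidth_def
proof (rule cINF_greatest)
  obtain e :: 'a where "e \<in> Basis" using nonempty_Basis by blast
  then show "{w::'a. norm w = 1} \<noteq> {}" using norm_Basis by blast
next
  fix w :: 'a assume "w \<in> {w. norm w = 1}"
  then have w: "norm w = 1" by simp
  have ww: "w \<bullet> w = 1" using w by (simp add: dot_square_norm)
  have m1: "p0 + rho *\<^sub>R w \<in> S" using sub rho w by (auto simp: dist_norm)
  have m2: "p0 - rho *\<^sub>R w \<in> S" using sub rho w by (auto simp: dist_norm)
  have ba: "bdd_above ((\<lambda>y. w \<bullet> y) ` S)"
    using bounded_inner_imp_bdd_above[OF bS, of w] by (simp add: inner_commute)
  have bb: "bdd_below ((\<lambda>y. w \<bullet> y) ` S)"
    using bounded_inner_imp_bdd_below[OF bS, of w] by (simp add: inner_commute)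
  have "w \<bullet> (p0 + rho *\<^sub>R w) \<le> (SUP y\<in>S. w \<bullet> y)"
    by (rule cSUP_upper[OF m1 ba])
  moreover have "(INF y\<in>S. w \<bullet> y) \<le> w \<bullet> (p0 - rho *\<^sub>R w)"
    by (rule cINF_lower[OF bb m2])
  ultimately show "2 * rho \<le> (SUP y\<in>S. w \<bullet> y) - (INF y\<in>S. w \<bullet> y)"
    using ww by (simp add: inner_add_right inner_diff_right)
qed

theorem lemma27:
  fixes f h :: "real^'d \<Rightarrow> real"
    and Lf Lh a b c :: real
    and q pk pstar :: "(real^'d) \<times> real \<times> real"
  assumes "Lf-lipschitz_on UNIV f" and "Lh-lipschitz_on UNIV h"
    and "a > 0" and "b > 0"
    and "pk \<in> Qtil f h a b"
    and "pstar \<in> Qtil f h a b \<inter> {p. norm (p - q) \<le> 2 * norm (pk - q)}"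
    and "\<forall>p \<in> Qtil f h a b \<inter> {p. norm (p - q) \<le> 2 * norm (pk - q)}.
           norm (pstar - q) \<le> norm (p - q)"
    and "c > 1"
  shows
    "let r = norm (pk - q);
         Qloc = Qtil f h a b \<inter> {p. norm (p - q) \<le> c * r};
         Ch = sqrt (Lh\<^sup>2 + a\<^sup>2);
         Cf = sqrt (Lf\<^sup>2 + a\<^sup>2 + b\<^sup>2);
         mu = min (a / Ch) (b / Cf);
         lam = 2 + a / b;
         kappa = (c - 1) / (lam + mu);
         ds = kappa * r;
         dt = kappa * r;
         pbar = pstar + (0, ds, a / b * ds + dt)
     in cball pbar (kappa * mu * r) \<subseteq> Qloc
        \<and> minwidth Qloc \<ge> 2 * kappa * mu * r
        \<and> c * r / minwidth Qloc \<le> c * (lam + mu) / ((c - 1) * mu)"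
proof -
  define r where "r = norm (pk - q)"
  define Qloc where "Qloc = Qtil f h a b \<inter> {p. norm (p - q) \<le> c * r}"
  define Ch where "Ch = sqrt (Lh\<^sup>2 + a\<^sup>2)"
  define Cf where "Cf = sqrt (Lf\<^sup>2 + a\<^sup>2 + b\<^sup>2)"
  define mu where "mu = min (a / Ch) (b / Cf)"
  define lam where "lam = 2 + a / b"
  define kappa where "kappa = (c - 1) / (lam + mu)"
  define ds where "ds = kappa * r"
  define pbar where "pbar = pstar + (0, ds, a / b * ds + ds)"
  have r0: "r \<ge> 0" unfolding r_def by simp
  have psr: "norm (pstar - q) \<le> r" using assms(5,7) r0 unfolding r_def by auto
  have ps: "pstar \<in> Qtil f h a b" using assms(6) by simp
  have C1: "cball pbar (kappa * mu * r) \<subseteq> Qloc"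
    unfolding Qloc_def
    by (rule core[OF assms(1,2,3,4) ps psr Ch_def Cf_def mu_def _ assms(8) r0 ds_def pbar_def])
       (simp add: kappa_def lam_def)
  have Chp: "Ch \<ge> a" unfolding Ch_def using assms(3) by (simp add: real_le_rsqrt less_imp_le)
  have Cfp: "Cf \<ge> b" unfolding Cf_def using assms(4)
    by (smt (verit) real_le_rsqrt zero_le_power2)
  have mupos: "mu > 0" unfolding mu_def using assms(3,4) Chp Cfp by simp
  have L: "lam + mu > 0" unfolding lam_def using assms(3,4) mupos by (smt (verit) divide_pos_pos)
  have kpos: "kappa > 0" unfolding kappa_def using assms(8) L by simp
  have bQ: "bounded Qloc"
    by (rule bounded_subset[of "cball q (c * r)"]) (auto simp: Qloc_def dist_norm norm_minus_commute)
  have C2: "minwidth Qloc \<ge> 2 * kappa * mu * r"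
    using minwidth_ge[OF bQ C1] kpos mupos r0 by simp
  have C3: "c * r / minwidth Qloc \<le> c * (lam + mu) / ((c - 1) * mu)"
  proof (cases "r = 0")
    case True
    then show ?thesis using assms(8) mupos L by simp
  next
    case False
    then have rp: "r > 0" using r0 by simp
    have pos: "2 * kappa * mu * r > 0" using kpos mupos rp by simp
    have "c * r / minwidth Qloc \<le> c * r / (2 * kappa * mu * r)"
      using C2 pos assms(8) rp by (intro divide_left_mono) auto
    also have "\<dots> = c * (lam + mu) / (2 * (c - 1) * mu)"
      unfolding kappa_def using rp L assms(8) mupos by (simp add: field_simps)
    also have "\<dots> \<le> c * (lam + mu) / ((c - 1) * mu)"
      using assms(8) mupos L by (intro divide_left_mono) auto
    finally show ?thesis .
  qed
  show ?thesis
    unfolding Let_def r_def[symmetric] Qloc_def[symmetric] Ch_def[symmetric] Cf_def[symmetric]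
      mu_def[symmetric] lam_def[symmetric] kappa_def[symmetric] ds_def[symmetric] pbar_def[symmetric]
    using C1 C2 C3 by simp
qed

end
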